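(* Let $k,k'\ge1$ be integers and $\varepsilon>0$. Let $x,y\in\mathbb{R}^k_{\ge0}$, $x',y'\in\mathbb{R}^{k'}_{\ge0}$ and $r,r'\in\mathbb{R}$ satisfy $$(x^\top\mathbf{1}_k)^2+\|x\|^2=(x'^\top\mathbf{1}_{k'})^2+\|x'\|^2=\varepsilon^2$$ and $$x^\top\mathbf{1}_k+x'^\top\mathbf{1}_{k'}=r+r'+\varepsilon\sqrt2.$$ Then $\|x+y+r\mathbf{1}_k\|^2+\|x'+y'+r'\mathbf{1}_{k'}\|^2\ge\varepsilon^2$.
   Context: $\mathbf{1}_k$ denotes the all-ones vector in $\mathbb{R}^k$, $\|\cdot\|$ the Euclidean norm, and $\mathbb{R}^k_{\ge0}$ the vectors with nonnegative entries. *)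

theory Defs
  imports "HOL-Analysis.Analysis"
begin

definition ones_vec :: "real^'n" where
  "ones_vec = (\<chi> i. 1)"

end

theory Submission
  imports Defs
begin

lemma ones_inner: "x \<bullet> (ones_vec::real^'n) = (\<Sum>i\<in>UNIV. x $ i)"
  by (simp add: inner_vec_def ones_vec_def)

lemma inner_nonneg_vec:
  fixes a b :: "real^'n"
  assumes "\<forall>i. a $ i \<ge> 0" "\<forall>i. b $ i \<ge> 0"
  shows "a \<bullet> b \<ge> 0"
  unfolding inner_vec_def using assms by (auto intro!: sum_nonneg)

lemma sq_le_sum:
  fixes x :: "real^'n"
  assumes "\<forall>i. x $ i \<ge> 0"
  shows "x \<bullet> x \<le> (x \<bullet> ones_vec)\<^sup>2"
proof -
  have "x \<bullet> x = (\<Sum>i\<in>UNIV. x $ i * x $ i)" by (simp add: inner_vec_def)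
  also have "\<dots> \<le> (\<Sum>i\<in>UNIV. x $ i * (\<Sum>j\<in>UNIV. x $ j))"
    apply (rule sum_mono)
    apply (rule mult_left_mono)
    using assms by (auto intro: member_le_sum)
  also have "\<dots> = (x \<bullet> ones_vec)\<^sup>2"
    by (simp add: ones_inner power2_eq_square sum_distrib_right)
  finally show ?thesis .
qed

lemma norm_lb:
  fixes a w :: "real^'n"
  shows "(norm a)\<^sup>2 \<ge> 2 * (a \<bullet> w) - w \<bullet> w"
proof -
  have "0 \<le> (a - w) \<bullet> (a - w)" by simp
  then show ?thesis by (simp add: power2_norm_eq_inner inner_diff_left inner_diff_right inner_commute)
qed

lemma key:
  fixes x y :: "real^'k" and x' y' :: "real^'m" and r r' \<epsilon> :: real
  assumes "\<epsilon> > 0"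
    and "\<forall>i. x $ i \<ge> 0" and "\<forall>i. y $ i \<ge> 0"
    and "\<forall>i. x' $ i \<ge> 0" and "\<forall>i. y' $ i \<ge> 0"
    and "(x \<bullet> ones_vec)\<^sup>2 + (norm x)\<^sup>2 = \<epsilon>\<^sup>2"
    and "(x' \<bullet> ones_vec)\<^sup>2 + (norm x')\<^sup>2 = \<epsilon>\<^sup>2"
    and "x \<bullet> ones_vec + x' \<bullet> ones_vec = r + r' + \<epsilon> * sqrt 2"
    and le: "x' \<bullet> ones_vec \<le> x \<bullet> ones_vec"
  shows "(norm (x + y + r *\<^sub>R ones_vec))\<^sup>2 + (norm (x' + y' + r' *\<^sub>R ones_vec))\<^sup>2 \<ge> \<epsilon>\<^sup>2"
proof -
  define s where "s = x \<bullet> ones_vec"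
  define s' where "s' = x' \<bullet> ones_vec"
  define c where "c = s - s'"
  obtain j :: 'm where True by blast
  define w' where "w' = x' + c *\<^sub>R axis j 1"
  have c0: "c \<ge> 0" using le by (simp add: c_def s_def s'_def)
  have xx: "x \<bullet> x = \<epsilon>\<^sup>2 - s\<^sup>2" using assms(6) by (simp add: s_def power2_norm_eq_inner)
  have xx': "x' \<bullet> x' = \<epsilon>\<^sup>2 - s'\<^sup>2" using assms(7) by (simp add: s'_def power2_norm_eq_inner)
  have s'0: "s' \<ge> 0" unfolding s'_def ones_inner using assms(4) by (auto intro: sum_nonneg)
  have "x' \<bullet> x' \<le> s'\<^sup>2" using sq_le_sum[OF assms(4)] by (simp add: s'_def)
  hence s'sq: "2 * s'\<^sup>2 \<ge> \<epsilon>\<^sup>2" using xx' by simp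
  have e2: "(sqrt 2 * s')\<^sup>2 \<ge> \<epsilon>\<^sup>2" using s'sq by (simp add: power_mult_distrib)
  have "0 \<le> sqrt 2 * s'" using s'0 by simp
  then have s'e: "sqrt 2 * s' \<ge> \<epsilon>" using power2_le_imp_le[OF e2] by blast
  have sq2: "sqrt 2 * sqrt 2 = 2" by simp
  have yx: "(x + y + r *\<^sub>R ones_vec) \<bullet> x = x \<bullet> x + y \<bullet> x + r * s"
  proof -
    have ox: "ones_vec \<bullet> x = s" by (simp add: s_def inner_commute)
    show ?thesis by (simp add: inner_add_left ox)
  qed
  have yx0: "y \<bullet> x \<ge> 0" using inner_nonneg_vec assms(2,3) by blast
  have A: "(norm (x + y + r *\<^sub>R ones_vec))\<^sup>2 \<ge> x \<bullet> x + 2 * r * s"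
    using norm_lb[of "x + y + r *\<^sub>R ones_vec" x] yx yx0 by simp
  have w'nn: "\<forall>i. w' $ i \<ge> 0" using assms(4) c0 by (simp add: w'_def axis_def)
  have yw0: "y' \<bullet> w' \<ge> 0" using inner_nonneg_vec assms(5) w'nn by blast
  have aj: "axis j (1::real) \<bullet> (ones_vec::real^'m) = 1" by (simp add: ones_inner axis_def)
  have x'j: "x' \<bullet> axis j 1 = x' $ j" by (simp add: inner_axis)
  have ajaj: "axis j (1::real) \<bullet> axis j 1 = 1" by (simp add: inner_axis)
  have onew: "ones_vec \<bullet> w' = s" 
    by (simp add: w'_def inner_add_right inner_commute[of ones_vec] aj s'_def c_def)
  have xw: "x' \<bullet> w' = x' \<bullet> x' + c * x' $ j" by (simp add: w'_def inner_add_right x'j)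
  have ww: "w' \<bullet> w' = x' \<bullet> x' + 2 * c * x' $ j + c\<^sup>2"
    by (simp add: w'_def inner_add_right inner_add_left x'j ajaj inner_commute[of "axis j 1" x'] power2_eq_square algebra_simps)
  have aw: "(x' + y' + r' *\<^sub>R ones_vec) \<bullet> w' = x' \<bullet> w' + y' \<bullet> w' + r' * s"
    by (simp add: inner_add_left onew)
  have B: "(norm (x' + y' + r' *\<^sub>R ones_vec))\<^sup>2 \<ge> x' \<bullet> x' + 2 * r' * s - c\<^sup>2"
    using norm_lb[of "x' + y' + r' *\<^sub>R ones_vec" w'] aw xw ww yw0 by simp
  have rr: "r + r' = s + s' - \<epsilon> * sqrt 2" using assms(8) by (simp add: s_def s'_def)
  have P1: "(s - s') * (4 * s' - 2 * sqrt 2 * \<epsilon>) \<ge> 0"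
  proof -
    have "4 * s' - 2 * sqrt 2 * \<epsilon> = sqrt 2 * (2 * (sqrt 2 * s' - \<epsilon>))"
      using sq2 by (simp add: algebra_simps)
    moreover have "sqrt 2 * (2 * (sqrt 2 * s' - \<epsilon>)) \<ge> 0" using s'e by simp
    ultimately show ?thesis using c0 c_def by simp
  qed
  have P2: "(sqrt 2 * s' - \<epsilon>)\<^sup>2 \<ge> 0" by simp
  have P2': "(sqrt 2 * s' - \<epsilon>)\<^sup>2 = 2 * s'\<^sup>2 - 2 * sqrt 2 * \<epsilon> * s' + \<epsilon>\<^sup>2"
    by (simp add: power2_eq_square algebra_simps)
  have "x \<bullet> x + 2 * r * s + (x' \<bullet> x' + 2 * r' * s - c\<^sup>2) = 
        \<epsilon>\<^sup>2 + ((s - s') * (4 * s' - 2 * sqrt 2 * \<epsilon>) + (sqrt 2 * s' - \<epsilon>)\<^sup>2)"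
  proof -
    have r'eq: "r' = s + s' - \<epsilon> * sqrt 2 - r" using rr by linarith
    show ?thesis unfolding xx xx' P2' c_def r'eq by (simp add: power2_eq_square algebra_simps)
  qed
  then show ?thesis using A B P1 P2 by linarith
qed

theorem lemma1:
  fixes x y :: "real^'k" and x' y' :: "real^'m" and r r' \<epsilon> :: real
  assumes "\<epsilon> > 0"
    and "\<forall>i. x $ i \<ge> 0" and "\<forall>i. y $ i \<ge> 0"
    and "\<forall>i. x' $ i \<ge> 0" and "\<forall>i. y' $ i \<ge> 0"
    and "(x \<bullet> ones_vec)\<^sup>2 + (norm x)\<^sup>2 = \<epsilon>\<^sup>2"
    and "(x' \<bullet> ones_vec)\<^sup>2 + (norm x')\<^sup>2 = \<epsilon>\<^sup>2"
    and "x \<bullet> ones_vec + x' \<bullet> ones_vec = r + r' + \<epsilon> * sqrt 2"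
  shows "(norm (x + y + r *\<^sub>R ones_vec))\<^sup>2 + (norm (x' + y' + r' *\<^sub>R ones_vec))\<^sup>2 \<ge> \<epsilon>\<^sup>2"
proof (cases "x' \<bullet> ones_vec \<le> x \<bullet> ones_vec")
  case True
  then show ?thesis using key[OF assms] by blast
next
  case False
  have "(norm (x' + y' + r' *\<^sub>R ones_vec))\<^sup>2 + (norm (x + y + r *\<^sub>R ones_vec))\<^sup>2 \<ge> \<epsilon>\<^sup>2"
    apply (rule key[of \<epsilon> x' y' x y r' r])
    using assms False by (auto simp: algebra_simps)
  then show ?thesis by simp
qed

end
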